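(* Let $G$ be a finite, simple, connected graph with $\dim_{wt}(G)=2$ and let $\{u,v\}$ be a weak total metric basis of $G$. Then: (1) there is a unique geodesic (shortest path) $P$ between $u$ and $v$; (2) every neighbor of $u$ and every neighbor of $v$ has degree at most three; (3) every vertex of $P$ other than $u$, $v$ and their neighbors has degree at most five; (4) the maximum degree of $G$ is at most eight; (5) for each $w\in\{u,v\}$ and each $z\in N(w)$, every $r\in N(z)$ satisfies $r\not\sim w$.
   Context: $d(x,y)$ is the shortest-path distance, $N(x)$ the set of neighbors of $x$, and $x\sim y$ denotes adjacency. A set $W\subseteq V(G)$ is a resolving set if for every two distinct vertices $y,z$ there is $x\in W$ with $d(y,x)\ne d(z,x)$. A set $W$ is a weak total resolving set (WTR-set) if $W$ is resolving and, for every $w\in W$ and every $x\in V(G)\setminus W$, there is $w'\in W\setminus\{w\}$ with $d(x,w')\ne d(w,w')$. $\dim_{wt}(G)$ is the minimum cardinality of a WTR-set, and a weak total metric basis is a WTR-set of that cardinality. *)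

theory Defs
  imports Main
begin

definition simple_graph :: "'a set \<Rightarrow> ('a \<Rightarrow> 'a \<Rightarrow> bool) \<Rightarrow> bool" where
  "simple_graph V E \<longleftrightarrow> finite V \<and> (\<forall>x y. E x y \<longrightarrow> x \<in> V \<and> y \<in> V)
     \<and> (\<forall>x y. E x y \<longrightarrow> E y x) \<and> (\<forall>x. \<not> E x x)"

text \<open>A walk is a nonempty list of vertices of V, consecutive ones adjacent;
its length (number of edges) is length p - 1.\<close>

definition is_walk :: "'a set \<Rightarrow> ('a \<Rightarrow> 'a \<Rightarrow> bool) \<Rightarrow> 'a list \<Rightarrow> bool" where
  "is_walk V E p \<longleftrightarrow> p \<noteq> [] \<and> set p \<subseteq> V \<and> (\<forall>i. Suc i < length p \<longrightarrow> E (p ! i) (p ! Suc i))"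

definition walk_between :: "'a set \<Rightarrow> ('a \<Rightarrow> 'a \<Rightarrow> bool) \<Rightarrow> 'a \<Rightarrow> 'a \<Rightarrow> 'a list \<Rightarrow> bool" where
  "walk_between V E x y p \<longleftrightarrow> is_walk V E p \<and> hd p = x \<and> last p = y"

definition connected_graph :: "'a set \<Rightarrow> ('a \<Rightarrow> 'a \<Rightarrow> bool) \<Rightarrow> bool" where
  "connected_graph V E \<longleftrightarrow> V \<noteq> {} \<and> (\<forall>x\<in>V. \<forall>y\<in>V. \<exists>p. walk_between V E x y p)"

text \<open>Shortest-path distance (meaningful for connected graphs).\<close>

definition dist :: "'a set \<Rightarrow> ('a \<Rightarrow> 'a \<Rightarrow> bool) \<Rightarrow> 'a \<Rightarrow> 'a \<Rightarrow> nat" where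
  "dist V E x y = (LEAST n. \<exists>p. walk_between V E x y p \<and> length p = Suc n)"

definition is_geodesic :: "'a set \<Rightarrow> ('a \<Rightarrow> 'a \<Rightarrow> bool) \<Rightarrow> 'a \<Rightarrow> 'a \<Rightarrow> 'a list \<Rightarrow> bool" where
  "is_geodesic V E x y p \<longleftrightarrow> walk_between V E x y p \<and> length p = Suc (dist V E x y)"

definition degree :: "'a set \<Rightarrow> ('a \<Rightarrow> 'a \<Rightarrow> bool) \<Rightarrow> 'a \<Rightarrow> nat" where
  "degree V E x = card {y \<in> V. E x y}"

definition resolving_set :: "'a set \<Rightarrow> ('a \<Rightarrow> 'a \<Rightarrow> bool) \<Rightarrow> 'a set \<Rightarrow> bool" where
  "resolving_set V E W \<longleftrightarrow> W \<subseteq> V \<and>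
     (\<forall>y\<in>V. \<forall>z\<in>V. y \<noteq> z \<longrightarrow> (\<exists>x\<in>W. dist V E y x \<noteq> dist V E z x))"

definition wtr_set :: "'a set \<Rightarrow> ('a \<Rightarrow> 'a \<Rightarrow> bool) \<Rightarrow> 'a set \<Rightarrow> bool" where
  "wtr_set V E W \<longleftrightarrow> resolving_set V E W \<and>
     (\<forall>w\<in>W. \<forall>x\<in>V - W. \<exists>w'\<in>W - {w}. dist V E x w' \<noteq> dist V E w w')"

definition dim_wt :: "'a set \<Rightarrow> ('a \<Rightarrow> 'a \<Rightarrow> bool) \<Rightarrow> nat" where
  "dim_wt V E = (LEAST k. \<exists>W. wtr_set V E W \<and> card W = k)"

definition wt_metric_basis :: "'a set \<Rightarrow> ('a \<Rightarrow> 'a \<Rightarrow> bool) \<Rightarrow> 'a set \<Rightarrow> bool" where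
  "wt_metric_basis V E W \<longleftrightarrow> wtr_set V E W \<and> card W = dim_wt V E"

end

theory Submission
  imports Defs
begin

locale sgraph =
  fixes V :: "'a set" and E :: "'a \<Rightarrow> 'a \<Rightarrow> bool"
  assumes sg: "simple_graph V E" and cg: "connected_graph V E"
begin

lemma E_V: "E x y \<Longrightarrow> x \<in> V \<and> y \<in> V" using sg unfolding simple_graph_def by blast
lemma E_sym: "E x y \<Longrightarrow> E y x" using sg unfolding simple_graph_def by blast
lemma E_irr: "\<not> E x x" using sg unfolding simple_graph_def by blast
lemma finV: "finite V" using sg unfolding simple_graph_def by blast

lemma walk_rev: assumes "is_walk V E p" shows "is_walk V E (rev p)"
  unfolding is_walk_def
proof (intro conjI allI impI)
  show "rev p \<noteq> []" "set (rev p) \<subseteq> V" using assms unfolding is_walk_def by auto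
  fix i assume i: "Suc i < length (rev p)"
  then have "E (p ! (length p - Suc (Suc i))) (p ! Suc (length p - Suc (Suc i)))"
    using assms unfolding is_walk_def by auto
  moreover have "Suc (length p - Suc (Suc i)) = length p - Suc i" using i by simp
  ultimately have "E (p ! (length p - Suc i)) (p ! (length p - Suc (Suc i)))"
    using E_sym by simp
  then show "E (rev p ! i) (rev p ! Suc i)" using i by (simp add: rev_nth)
qed

lemma dist_le: assumes "walk_between V E x y p" shows "dist V E x y \<le> length p - 1"
proof -
  have "p \<noteq> []" using assms unfolding walk_between_def is_walk_def by auto
  then have "length p = Suc (length p - 1)" by simp
  then show ?thesis unfolding dist_def using assms by (metis (mono_tags, lifting) Least_le)
qed

lemma dist_ex: assumes "x \<in> V" "y \<in> V"
  shows "\<exists>p. walk_between V E x y p \<and> length p = Suc (dist V E x y)"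
proof -
  obtain p where p: "walk_between V E x y p" using cg assms unfolding connected_graph_def by blast
  then have "p \<noteq> []" unfolding walk_between_def is_walk_def by auto
  then have "\<exists>n. \<exists>p. walk_between V E x y p \<and> length p = Suc n" using p
    by (metis Suc_pred length_greater_0_conv)
  then show ?thesis unfolding dist_def by (rule LeastI_ex)
qed

lemma dist_sym_le: assumes "x \<in> V" "y \<in> V" shows "dist V E y x \<le> dist V E x y"
proof -
  obtain p where p: "walk_between V E x y p" "length p = Suc (dist V E x y)"
    using dist_ex assms by blast
  then have "p \<noteq> []" unfolding walk_between_def is_walk_def by auto
  then have "walk_between V E y x (rev p)" using p walk_rev
    unfolding walk_between_def by (simp add: hd_rev last_rev)
  then show ?thesis using dist_le p by fastforce
qed

lemma dist_sym: "x \<in> V \<Longrightarrow> y \<in> V \<Longrightarrow> dist V E x y = dist V E y x"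
  using dist_sym_le by (meson antisym)

lemma walk_cons: assumes "is_walk V E (a # p)" "p \<noteq> []"
  shows "is_walk V E p \<and> E a (hd p)"
proof
  show "is_walk V E p" unfolding is_walk_def
  proof (intro conjI allI impI)
    show "p \<noteq> []" "set p \<subseteq> V" using assms unfolding is_walk_def by auto
    fix i assume "Suc i < length p"
    then have "Suc (Suc i) < length (a # p)" by simp
    then have "E ((a#p) ! Suc i) ((a#p) ! Suc (Suc i))" using assms(1) unfolding is_walk_def by blast
    then show "E (p ! i) (p ! Suc i)" by simp
  qed
  have "E ((a#p) ! 0) ((a#p) ! Suc 0)" using assms unfolding is_walk_def by auto
  then show "E a (hd p)" using assms(2) by (simp add: hd_conv_nth)
qed

lemma walk_cons2: assumes "is_walk V E p" "E a (hd p)"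
  shows "is_walk V E (a # p)"
  unfolding is_walk_def
proof (intro conjI allI impI)
  show "a # p \<noteq> []" by simp
  show "set (a # p) \<subseteq> V" using assms E_V unfolding is_walk_def by auto
  fix i assume i: "Suc i < length (a # p)"
  show "E ((a # p) ! i) ((a # p) ! Suc i)"
  proof (cases i)
    case 0
    then show ?thesis using assms i by (simp add: hd_conv_nth)
  next
    case (Suc j)
    then show ?thesis using assms i unfolding is_walk_def by auto
  qed
qed

lemma dist_step: assumes "E x y" "z \<in> V" shows "dist V E x z \<le> Suc (dist V E y z)"
proof -
  obtain p where p: "walk_between V E y z p" "length p = Suc (dist V E y z)"
    using dist_ex assms E_V by blast
  then have "walk_between V E x z (x # p)"
    using walk_cons2[of p x] assms unfolding walk_between_def
    by (metis list.sel(1) last_ConsR is_walk_def)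
  then show ?thesis using dist_le p by fastforce
qed

lemma walk_tri: "is_walk V E p \<Longrightarrow> z \<in> V \<Longrightarrow>
   dist V E (hd p) z \<le> (length p - 1) + dist V E (last p) z"
proof (induction p)
  case Nil
  then show ?case by (simp add: is_walk_def)
next
  case (Cons a p)
  show ?case
  proof (cases "p = []")
    case True
    then show ?thesis by simp
  next
    case False
    then have w: "is_walk V E p" "E a (hd p)" using walk_cons Cons by auto
    have "dist V E a z \<le> Suc (dist V E (hd p) z)" using dist_step w Cons by blast
    also have "\<dots> \<le> Suc ((length p - 1) + dist V E (last p) z)" using Cons w by simp
    finally show ?thesis using False by (cases p) auto
  qed
qed

lemma dist_tri: assumes "x \<in> V" "y \<in> V" "z \<in> V"
  shows "dist V E x z \<le> dist V E x y + dist V E y z"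
proof -
  obtain p where p: "walk_between V E x y p" "length p = Suc (dist V E x y)"
    using dist_ex assms by blast
  then show ?thesis using walk_tri[of p z] assms unfolding walk_between_def by auto
qed

lemma dist_self: "x \<in> V \<Longrightarrow> dist V E x x = 0"
  using dist_le[of x x "[x]"] unfolding walk_between_def is_walk_def by auto

lemma dist_0: assumes "x \<in> V" "y \<in> V" "dist V E x y = 0" shows "x = y"
proof -
  obtain p where p: "walk_between V E x y p" "length p = 1"
    using dist_ex assms by fastforce
  then obtain a where "p = [a]" by (metis One_nat_def length_0_conv length_Suc_conv)
  then show ?thesis using p unfolding walk_between_def by auto
qed

lemma dist_1: assumes "x \<in> V" "y \<in> V" "dist V E x y = 1" shows "E x y"
proof -
  obtain p where p: "walk_between V E x y p" "length p = 2"
    using dist_ex assms by fastforce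
  then obtain a b where ab: "p = [a, b]"
    by (metis One_nat_def Suc_1 length_0_conv length_Suc_conv)
  then show ?thesis using p unfolding walk_between_def is_walk_def by force
qed

lemma adj_dist: assumes "E x y" shows "dist V E x y = 1"
proof -
  have "walk_between V E x y [x, y]" using assms E_V
    unfolding walk_between_def is_walk_def by (auto simp: less_Suc_eq)
  then have "dist V E x y \<le> 1" using dist_le by fastforce
  moreover have "dist V E x y \<noteq> 0" using dist_0 assms E_V E_irr by blast
  ultimately show ?thesis by simp
qed

lemma nb_dist: assumes "E x r" "w \<in> V"
  shows "dist V E r w \<le> Suc (dist V E x w) \<and> dist V E x w \<le> Suc (dist V E r w)"
  using dist_step assms E_sym by blast

lemma walk_take: assumes "is_walk V E p" "i < length p"
  shows "walk_between V E (hd p) (p ! i) (take (Suc i) p)"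
  using assms unfolding walk_between_def is_walk_def
  by (auto simp: last_conv_nth hd_conv_nth dest: in_set_takeD)

lemma walk_drop: assumes "is_walk V E p" "i < length p"
  shows "walk_between V E (p ! i) (last p) (drop i p)"
  using assms unfolding walk_between_def is_walk_def
  by (auto simp: hd_drop_conv_nth dest: in_set_dropD)

end


locale G2 = sgraph V E for V :: "'a set" and E +
  fixes u v :: 'a
  assumes uV: "u \<in> V" and vV: "v \<in> V" and uv: "u \<noteq> v"
  and res: "\<forall>y\<in>V. \<forall>z\<in>V. y \<noteq> z \<longrightarrow> dist V E y u \<noteq> dist V E z u \<or> dist V E y v \<noteq> dist V E z v"
  and tu: "\<forall>x\<in>V. x \<noteq> u \<longrightarrow> x \<noteq> v \<longrightarrow> dist V E x v \<noteq> dist V E u v"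
  and tv: "\<forall>x\<in>V. x \<noteq> u \<longrightarrow> x \<noteq> v \<longrightarrow> dist V E x u \<noteq> dist V E v u"
begin

lemma swap: "G2 V E v u"
  using uV vV uv res tu tv by unfold_locales blast+

definition f where "f r = (dist V E r u, dist V E r v)"

lemma f_inj: "inj_on f V"
  using res unfolding inj_on_def f_def by blast

lemma deg_le: assumes "f ` {y \<in> V. E x y} \<subseteq> S" "finite S"
  shows "degree V E x \<le> card S"
proof -
  have "degree V E x = card (f ` {y \<in> V. E x y})" unfolding degree_def
    using f_inj by (simp add: card_image inj_on_subset)
  also have "\<dots> \<le> card S" using assms card_mono by blast
  finally show ?thesis .
qed

lemma card3: "card {a, b, c} \<le> 3"
proof -
  have "card (set [a,b,c]) \<le> 3" using card_length[of "[a,b,c]"] by simp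
  then show ?thesis by simp
qed

lemma deg8: assumes "x \<in> V" shows "degree V E x \<le> 8"
proof -
  define a where "a = dist V E x u"
  define b where "b = dist V E x v"
  define S where "S = ({a-1, a, a+1} \<times> {b-1, b, b+1}) - {(a,b)}"
  have "f ` {y \<in> V. E x y} \<subseteq> S"
  proof
    fix q assume "q \<in> f ` {y \<in> V. E x y}"
    then obtain r where r: "r \<in> V" "E x r" "q = f r" by blast
    have "r \<noteq> x" using r E_irr by blast
    then have ne: "f r \<noteq> f x" using f_inj r assms unfolding inj_on_def by blast
    have m1: "dist V E r u \<in> {a-1, a, a+1}" "dist V E r v \<in> {b-1, b, b+1}"
      using nb_dist[OF r(2) uV] nb_dist[OF r(2) vV] unfolding a_def b_def by auto
    have fx: "f x = (a, b)" unfolding f_def a_def b_def by simp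
    have "f r \<in> {a-1, a, a+1} \<times> {b-1, b, b+1}" unfolding f_def using m1 by (rule SigmaI)
    then show "q \<in> S" using r(3) ne fx unfolding S_def by simp
  qed
  moreover have "card S \<le> 8"
  proof -
    have "card ({a-1, a, a+1} \<times> {b-1, b, b+1}) = card {a-1, a, a+1} * card {b-1, b, b+1}"
      by (rule card_cartesian_product)
    also have "\<dots> \<le> 3 * 3" by (rule mult_le_mono[OF card3 card3])
    finally have c9: "card ({a-1, a, a+1} \<times> {b-1, b, b+1}) \<le> 9" by simp
    have "(a, b) \<in> {a-1, a, a+1} \<times> {b-1, b, b+1}" by blast
    then have "card S = card ({a-1, a, a+1} \<times> {b-1, b, b+1}) - 1"
      unfolding S_def by (intro card_Diff_singleton) 
    then show ?thesis using c9 by linarith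
  qed
  moreover have "finite S" unfolding S_def by simp
  ultimately show ?thesis using deg_le[of x S] by linarith
qed

lemma deg5: assumes "x \<in> V" "x \<noteq> u" "x \<noteq> v"
  "dist V E x u + dist V E x v = dist V E u v"
  shows "degree V E x \<le> 5"
proof -
  define D where "D = dist V E u v"
  define a where "a = dist V E x u"
  define b where "b = dist V E x v"
  have a1: "a \<ge> 1" using dist_0 assms uV unfolding a_def by fastforce
  have b1: "b \<ge> 1" using dist_0 assms vV unfolding b_def by fastforce
  define S where "S = {(a-1,b+1),(a+1,b-1),(a,b+1),(a+1,b),(a+1,b+1)}"
  have "f ` {y \<in> V. E x y} \<subseteq> S"
  proof
    fix q assume "q \<in> f ` {y \<in> V. E x y}"
    then obtain r where r: "r \<in> V" "E x r" "q = f r" by blast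
    have "r \<noteq> x" using r E_irr by blast
    then have ne: "f r \<noteq> f x" using f_inj r assms unfolding inj_on_def by blast
    have tri: "D \<le> dist V E r u + dist V E r v"
      using dist_tri[OF uV r(1) vV] dist_sym[OF uV r(1)] unfolding D_def by simp
    have 1: "dist V E r u \<le> Suc a" "a \<le> Suc (dist V E r u)"
      "dist V E r v \<le> Suc b" "b \<le> Suc (dist V E r v)"
      using nb_dist[OF r(2) uV] nb_dist[OF r(2) vV] unfolding a_def b_def by auto
    have ab: "a + b = D" using assms unfolding a_def b_def D_def by simp
    obtain a' b' where ab': "a' = dist V E r u" "b' = dist V E r v" by blast
    have ne': "a' \<noteq> a \<or> b' \<noteq> b" using ne ab' unfolding f_def a_def b_def by auto
    have A: "a' = a-1 \<or> a' = a \<or> a' = a+1" using 1 ab' by linarith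
    have B: "b' = b-1 \<or> b' = b \<or> b' = b+1" using 1 ab' by linarith
    have tri': "a + b \<le> a' + b'" using tri ab ab' by simp
    from A B have "(a', b') \<in> S" unfolding S_def
      using ne' tri' a1 b1 by (elim disjE) simp_all
    then show "q \<in> S" using r ab' unfolding f_def by simp
  qed
  moreover have "card S \<le> 5"
  proof -
    have "card (set [(a-1,b+1),(a+1,b-1),(a,b+1),(a+1,b),(a+1,b+1)]) \<le> 5"
      using card_length[of "[(a-1,b+1),(a+1,b-1),(a,b+1),(a+1,b),(a+1,b+1)]"] by simp
    then show ?thesis unfolding S_def by simp
  qed
  moreover have "finite S" unfolding S_def by simp
  ultimately show ?thesis using deg_le[of x S] by linarith
qed

lemma no_tri: assumes "E u z" "E z r" shows "\<not> E r u"
proof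
  assume ru: "E r u"
  have V: "z \<in> V" "r \<in> V" using assms E_V by auto
  have ne: "z \<noteq> u" "r \<noteq> u" "r \<noteq> z" using assms ru E_irr by auto
  have du: "dist V E z u = 1" "dist V E r u = 1" "dist V E v u = dist V E u v"
    using adj_dist E_sym assms ru dist_sym uV vV by auto
  show False
  proof (cases "z = v")
    case True
    then show ?thesis using tv V ne du by auto
  next
    case zv: False
    show ?thesis
    proof (cases "r = v")
      case True
      then show ?thesis using tv V ne du zv by auto
    next
      case False
      have a: "dist V E z v \<noteq> dist V E u v" "dist V E r v \<noteq> dist V E u v"
        using tu V ne zv False by auto
      have b: "dist V E z v \<noteq> dist V E r v" using res V ne du by auto
      have c: "dist V E z v \<le> Suc (dist V E u v)" "dist V E u v \<le> Suc (dist V E z v)"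
        "dist V E r v \<le> Suc (dist V E u v)" "dist V E u v \<le> Suc (dist V E r v)"
        "dist V E z v \<le> Suc (dist V E r v)" "dist V E r v \<le> Suc (dist V E z v)"
        using nb_dist[OF assms(1) vV] nb_dist[OF ru vV] nb_dist[OF assms(2) vV] by auto
      show False using a b c by arith
    qed
  qed
qed

lemma deg3: assumes "E u z" shows "degree V E z \<le> 3"
proof -
  define D where "D = dist V E u v"
  define e where "e = dist V E z v"
  define T where "T = {e-1, e, e+1} - {D}"
  define S where "S = insert (0, D) ((\<lambda>b. (2::nat, b)) ` T)"
  have zV: "z \<in> V" using assms E_V by auto
  have "D \<in> {e-1, e, e+1}"
    using nb_dist[OF assms vV] unfolding D_def e_def by auto
  then have cT: "card T \<le> 2" unfolding T_def using card3[of "e-1" e "e+1"]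
    by (simp add: card_Diff_singleton)
  have "card S \<le> 3"
  proof -
    have "card S \<le> Suc (card ((\<lambda>b. (2::nat, b)) ` T))" unfolding S_def
      by (simp add: card_insert_le_m1 card_insert_if)
    also have "\<dots> \<le> Suc (card T)" using card_image_le[of T "\<lambda>b. (2::nat, b)"] T_def by simp
    finally show ?thesis using cT by simp
  qed
  moreover have "f ` {y \<in> V. E z y} \<subseteq> S"
  proof
    fix q assume "q \<in> f ` {y \<in> V. E z y}"
    then obtain r where r: "r \<in> V" "E z r" "q = f r" by blast
    show "q \<in> S"
    proof (cases "r = u")
      case True
      then show ?thesis using r dist_self uV unfolding S_def f_def D_def by simp
    next
      case False
      have "\<not> E r u" using no_tri assms r by blast
      then have n1: "dist V E r u \<noteq> 1" using dist_1 r uV by blast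
      have n0: "dist V E r u \<noteq> 0" using dist_0 r uV False by blast
      have "dist V E r u \<le> Suc (dist V E z u)" using nb_dist[OF r(2) uV] by simp
      moreover have "dist V E z u = 1" using adj_dist E_sym assms by blast
      ultimately have 2: "dist V E r u = 2" using n0 n1 by simp
      have "dist V E r v \<noteq> D"
      proof (cases "r = v")
        case True
        then show ?thesis using dist_self vV uv dist_0 uV unfolding D_def by metis
      next
        case False
        then show ?thesis using tu r \<open>r \<noteq> u\<close> unfolding D_def by blast
      qed
      moreover have "dist V E r v \<in> {e-1, e, e+1}"
        using nb_dist[OF r(2) vV] unfolding e_def by auto
      ultimately show ?thesis using 2 r unfolding S_def T_def f_def by auto
    qed
  qed
  moreover have "finite S" unfolding S_def T_def by simp
  ultimately show ?thesis using deg_le[of z S] by linarith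
qed

lemma geo: assumes "is_geodesic V E u v p" "i < length p"
  shows "p ! i \<in> V \<and> dist V E (p ! i) u = i \<and> dist V E (p ! i) v = dist V E u v - i"
proof -
  have w: "is_walk V E p" "hd p = u" "last p = v" "length p = Suc (dist V E u v)"
    using assms unfolding is_geodesic_def walk_between_def by auto
  have xV: "p ! i \<in> V" using w assms(2) unfolding is_walk_def by auto
  have 1: "dist V E u (p ! i) \<le> i" using dist_le[OF walk_take[OF w(1) assms(2)]] w assms by simp
  have 2: "dist V E (p ! i) v \<le> dist V E u v - i"
    using dist_le[OF walk_drop[OF w(1) assms(2)]] w assms by simp
  have 3: "dist V E u v \<le> dist V E u (p ! i) + dist V E (p ! i) v" using dist_tri uV vV xV by blast
  show ?thesis using 1 2 3 xV dist_sym[OF uV xV] assms w by auto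
qed

lemma geo_unique: assumes "is_geodesic V E u v p" "is_geodesic V E u v q" shows "p = q"
proof (rule nth_equalityI)
  show l: "length p = length q" using assms unfolding is_geodesic_def by simp
  fix i assume "i < length p"
  then have i: "i < length p" "i < length q" using l by auto
  have g1: "p ! i \<in> V" "dist V E (p ! i) u = i" "dist V E (p ! i) v = dist V E u v - i"
    using geo[OF assms(1) i(1)] by auto
  have g2: "q ! i \<in> V" "dist V E (q ! i) u = i" "dist V E (q ! i) v = dist V E u v - i"
    using geo[OF assms(2) i(2)] by auto
  show "p ! i = q ! i"
  proof (rule ccontr)
    assume "p ! i \<noteq> q ! i"
    then have "dist V E (p ! i) u \<noteq> dist V E (q ! i) u \<or> dist V E (p ! i) v \<noteq> dist V E (q ! i) v"
      using res g1(1) g2(1) by blast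
    then show False using g1 g2 by simp
  qed
qed

lemma geo_ex: "\<exists>p. is_geodesic V E u v p"
  using dist_ex uV vV unfolding is_geodesic_def by blast

lemma geo_deg: assumes "is_geodesic V E u v P" "x \<in> set P" "x \<noteq> u" "x \<noteq> v"
  shows "degree V E x \<le> 5"
proof -
  obtain i where i: "i < length P" "x = P ! i" using assms(2) by (metis in_set_conv_nth)
  have "i \<le> dist V E u v" using i assms(1) unfolding is_geodesic_def by simp
  then show ?thesis using geo[OF assms(1) i(1)] i deg5 assms by simp
qed

end

theorem theorem2:
  fixes V :: "'a set" and E :: "'a \<Rightarrow> 'a \<Rightarrow> bool" and u v :: 'a
  assumes "simple_graph V E" and "connected_graph V E"
    and "dim_wt V E = 2"
    and "wt_metric_basis V E {u, v}"
  shows "(\<exists>!P. is_geodesic V E u v P)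
    \<and> (\<forall>w\<in>{u, v}. \<forall>z\<in>V. E w z \<longrightarrow> degree V E z \<le> 3)
    \<and> (\<forall>P. is_geodesic V E u v P \<longrightarrow>
          (\<forall>x\<in>set P. x \<noteq> u \<and> x \<noteq> v \<and> \<not> E u x \<and> \<not> E v x \<longrightarrow> degree V E x \<le> 5))
    \<and> (\<forall>x\<in>V. degree V E x \<le> 8)
    \<and> (\<forall>w\<in>{u, v}. \<forall>z\<in>V. E w z \<longrightarrow> (\<forall>r\<in>V. E z r \<longrightarrow> \<not> E r w))"
proof -
  have w: "wtr_set V E {u, v}" "card {u, v} = 2" using assms(3,4) unfolding wt_metric_basis_def by auto
  have uv: "u \<noteq> v" using w(2) by (cases "u = v") auto
  have r: "resolving_set V E {u, v}" using w unfolding wtr_set_def by blast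
  then have uvV: "u \<in> V" "v \<in> V" unfolding resolving_set_def by auto
  have res: "\<forall>y\<in>V. \<forall>z\<in>V. y \<noteq> z \<longrightarrow> dist V E y u \<noteq> dist V E z u \<or> dist V E y v \<noteq> dist V E z v"
    using r unfolding resolving_set_def by blast
  have t: "\<forall>w\<in>{u,v}. \<forall>x\<in>V - {u,v}. \<exists>w'\<in>{u,v} - {w}. dist V E x w' \<noteq> dist V E w w'"
    using w unfolding wtr_set_def by blast
  have s1: "{u,v} - {u} = {v}" "{u,v} - {v} = {u}" using uv by auto
  have tu: "\<forall>x\<in>V. x \<noteq> u \<longrightarrow> x \<noteq> v \<longrightarrow> dist V E x v \<noteq> dist V E u v"
  proof (intro ballI impI)
    fix x assume "x \<in> V" "x \<noteq> u" "x \<noteq> v"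
    then have "x \<in> V - {u,v}" by simp
    then have "\<exists>w'\<in>{u,v} - {u}. dist V E x w' \<noteq> dist V E u w'" using t by blast
    then show "dist V E x v \<noteq> dist V E u v" unfolding s1 by simp
  qed
  have tv: "\<forall>x\<in>V. x \<noteq> u \<longrightarrow> x \<noteq> v \<longrightarrow> dist V E x u \<noteq> dist V E v u"
  proof (intro ballI impI)
    fix x assume "x \<in> V" "x \<noteq> u" "x \<noteq> v"
    then have "x \<in> V - {u,v}" by simp
    then have "\<exists>w'\<in>{u,v} - {v}. dist V E x w' \<noteq> dist V E v w'" using t by blast
    then show "dist V E x u \<noteq> dist V E v u" unfolding s1 by simp
  qed
  interpret G: G2 V E u v
    by (rule G2.intro[OF sgraph.intro[OF assms(1,2)]], rule G2_axioms.intro[OF uvV uv res tu tv])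
  interpret H: G2 V E v u by (rule G.swap)
  have 1: "\<exists>!P. is_geodesic V E u v P" using G.geo_ex G.geo_unique by blast
  have 2: "\<forall>w\<in>{u, v}. \<forall>z\<in>V. E w z \<longrightarrow> degree V E z \<le> 3"
    using G.deg3 H.deg3 by blast
  have 3: "\<forall>P. is_geodesic V E u v P \<longrightarrow>
          (\<forall>x\<in>set P. x \<noteq> u \<and> x \<noteq> v \<and> \<not> E u x \<and> \<not> E v x \<longrightarrow> degree V E x \<le> 5)"
    using G.geo_deg by blast
  have 4: "\<forall>x\<in>V. degree V E x \<le> 8" using G.deg8 by blast
  have 5: "\<forall>w\<in>{u, v}. \<forall>z\<in>V. E w z \<longrightarrow> (\<forall>r\<in>V. E z r \<longrightarrow> \<not> E r w)"
    using G.no_tri H.no_tri by blast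
  show ?thesis using 1 2 3 4 5 by blast
qed

end
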